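(* Let $L$ be a parabolic operator with merely bounded coefficients, $\Omega\subseteq\mathbb{R}^{n+1}$ open, $\mathbf{x}_0\in\partial_e\Omega\setminus\{\infty\}$ and $R>0$. Assume there exist $\gamma,\eta>0$ such that for every $\mathbf{x}\in\partial_e\Omega$ and $r>0$ with $\mathbf{Q}_r(\mathbf{x})\subseteq\mathbf{Q}_{3R}(\mathbf{x}_0)$: every function $v$ with $v\ge0$ in $\mathbf{Q}_r(\mathbf{x})\cap\Omega$, $Lv=0$ weakly in $\mathbf{Q}_r(\mathbf{x})\cap\Omega$, and $v=1$ continuously on $\mathbf{Q}_r(\mathbf{x})\cap\partial_e\Omega$ satisfies $v(\mathbf{Y})\ge\eta$ for all $\mathbf{Y}\in\mathbf{Q}_{\gamma r}(\mathbf{x})\cap\Omega$. Then there exist $C,\alpha_H>0$, depending only on $\eta$, $\gamma$ and $n$, such that every function $u$ with $u\ge0$ in $\mathbf{Q}_{3R}(\mathbf{x}_0)\cap\Omega$, $Lu=0$ weakly in $\mathbf{Q}_{3R}(\mathbf{x}_0)\cap\Omega$, and $u=0$ continuously on $\mathbf{Q}_{3R}(\mathbf{x}_0)\cap\partial_e\Omega$ satisfies $$u(\mathbf{Y})\le C\left(\frac{\delta(\mathbf{Y})}{R}\right)^{\alpha_H}\sup_{\mathbf{Q}_{3R}(\mathbf{x}_0)\cap\Omega}u\qquad\text{for all }\mathbf{Y}\in\mathbf{Q}_R(\mathbf{x}_0)\cap\Omega.$$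
   Context: Points of $\mathbb{R}^{n+1}=\mathbb{R}^n\times\mathbb{R}$ written in boldface; parabolic norm $\|(X,t)\|=\max\{|X|,|t|^{1/2}\}$; $\mathbf{Q}_r(\mathbf{X})=\{\mathbf{Y}:\|\mathbf{X}-\mathbf{Y}\|<r\}$, $\mathbf{Q}_r^{\mp}(X,t)=\mathbf{Q}_r(X,t)\cap\{s\lessgtr t\}$. Operators: $L=\partial_t-\operatorname{div}_X(A\nabla_X)$, $A$ real measurable (not necessarily symmetric) $n\times n$, $\lambda|\xi|^2\le A\xi\cdot\xi$, $\|A\|_{L^\infty}\le\lambda^{-1}$; a weak solution of $Lu=0$ in open $U$ is $u\in W^{1,2}_{loc}(U)$ with $\iint_U(-u\partial_t\psi+A\nabla_Xu\cdot\nabla_X\psi)=0$ for $\psi\in C_c^\infty(U)$. Boundary: $\mathcal{P}\Omega=\{(x,t)\in\partial\Omega:\mathbf{Q}^-_r(x,t)\cap\Omega^c\ne\emptyset\ \forall r\}$; $\partial_a\Omega=\partial\Omega\setminus\mathcal{P}\Omega$; $\partial_s\Omega=\{(x,t)\in\partial_a\Omega:\exists r,\mathbf{Q}_r^+(x,t)\cap\Omega=\emptyset\}$; $\partial_{ss}\Omega=\partial_a\Omega\setminus\partial_s\Omega$; $\partial_n\Omega=\mathcal{P}\Omega$ (bounded) or $\mathcal{P}\Omega\cup\{\infty\}$ (unbounded); $\partial_e\Omega=\partial_n\Omega\cup\partial_{ss}\Omega$. $\delta(\mathbf{Y})=\operatorname{dist}(\mathbf{Y},\partial_e\Omega)$ in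 the parabolic distance. *)

theory Defs
  imports "HOL-Analysis.Analysis"
begin

text \<open>Points of R^(n+1) = R^n x R, with the spatial dimension n given by the finite type 'n.\<close>
type_synonym 'n pt = "(real^'n) \<times> real"

definition pdist :: "('n::finite) pt \<Rightarrow> ('n::finite) pt \<Rightarrow> real" where
  "pdist p q = max (norm (fst p - fst q)) (sqrt \<bar>snd p - snd q\<bar>)"

definition pcyl :: "real \<Rightarrow> ('n::finite) pt \<Rightarrow> ('n::finite) pt set" where
  "pcyl r x = {y. pdist x y < r}"

definition pcyl_minus :: "real \<Rightarrow> ('n::finite) pt \<Rightarrow> ('n::finite) pt set" where
  "pcyl_minus r x = pcyl r x \<inter> {y. snd y < snd x}"

definition pcyl_plus :: "real \<Rightarrow> ('n::finite) pt \<Rightarrow> ('n::finite) pt set" where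
  "pcyl_plus r x = pcyl r x \<inter> {y. snd y > snd x}"

definition par_bdry :: "('n::finite) pt set \<Rightarrow> ('n::finite) pt set" where
  "par_bdry \<Omega> = {z \<in> frontier \<Omega>. \<forall>r>0. pcyl_minus r z \<inter> - \<Omega> \<noteq> {}}"

definition abn_bdry :: "('n::finite) pt set \<Rightarrow> ('n::finite) pt set" where
  "abn_bdry \<Omega> = frontier \<Omega> - par_bdry \<Omega>"

definition sing_bdry :: "('n::finite) pt set \<Rightarrow> ('n::finite) pt set" where
  "sing_bdry \<Omega> = {z \<in> abn_bdry \<Omega>. \<exists>r>0. pcyl_plus r z \<inter> \<Omega> = {}}"

definition ssing_bdry :: "('n::finite) pt set \<Rightarrow> ('n::finite) pt set" where
  "ssing_bdry \<Omega> = abn_bdry \<Omega> - sing_bdry \<Omega>"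

text \<open>Finite part of the essential boundary: (partial_e Omega) minus the point at infinity.\<close>
definition ess_bdry :: "('n::finite) pt set \<Rightarrow> ('n::finite) pt set" where
  "ess_bdry \<Omega> = par_bdry \<Omega> \<union> ssing_bdry \<Omega>"

text \<open>delta(Y): parabolic distance to the essential boundary (the point at infinity is at
  infinite distance and does not contribute).\<close>
definition pdelta :: "('n::finite) pt set \<Rightarrow> ('n::finite) pt \<Rightarrow> real" where
  "pdelta \<Omega> y = Inf {pdist y z | z. z \<in> ess_bdry \<Omega>}"

primrec Ck :: "nat \<Rightarrow> ('a::euclidean_space \<Rightarrow> real) \<Rightarrow> bool" where
  "Ck 0 f = continuous_on UNIV f"
| "Ck (Suc k) f = ((\<forall>p. f differentiable (at p)) \<and>
                    (\<forall>v. Ck k (\<lambda>p. frechet_derivative f (at p) v)))"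

definition smooth_fun :: "('a::euclidean_space \<Rightarrow> real) \<Rightarrow> bool" where
  "smooth_fun f = (\<forall>k. Ck k f)"

definition test_fun :: "'a::euclidean_space set \<Rightarrow> ('a \<Rightarrow> real) \<Rightarrow> bool" where
  "test_fun U \<psi> = (smooth_fun \<psi> \<and> compact (closure {p. \<psi> p \<noteq> 0}) \<and>
                    closure {p. \<psi> p \<noteq> 0} \<subseteq> U)"

definition dX :: "(('n::finite) pt \<Rightarrow> real) \<Rightarrow> ('n::finite) pt \<Rightarrow> 'n \<Rightarrow> real" where
  "dX \<psi> p i = frechet_derivative \<psi> (at p) (axis i 1, 0)"

definition gradX :: "(('n::finite) pt \<Rightarrow> real) \<Rightarrow> ('n::finite) pt \<Rightarrow> real^'n" where
  "gradX \<psi> p = (\<chi> i. dX \<psi> p i)"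

definition dT :: "(('n::finite) pt \<Rightarrow> real) \<Rightarrow> ('n::finite) pt \<Rightarrow> real" where
  "dT \<psi> p = frechet_derivative \<psi> (at p) (0, 1)"

definition coeff_ok :: "real \<Rightarrow> (('n::finite) pt \<Rightarrow> real^('n::finite)^'n) \<Rightarrow> bool" where
  "coeff_ok lam A = (lam > 0 \<and>
     (\<forall>i j. (\<lambda>p. A p $ i $ j) \<in> borel_measurable lborel) \<and>
     (\<forall>p \<xi>. lam * (norm \<xi>)\<^sup>2 \<le> (A p *v \<xi>) \<bullet> \<xi>) \<and>
     (\<forall>p. onorm (\<lambda>\<xi>. A p *v \<xi>) \<le> 1 / lam))"

text \<open>Weak solutions of L u = du/dt - div_X (A grad_X u) = 0 in U:
  u in W^{1,2}_loc(U) (u and its weak spatial gradient g locally square integrable) and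
  the integral identity against all test functions.\<close>
definition weak_sol :: "(('n::finite) pt \<Rightarrow> real^('n::finite)^'n) \<Rightarrow> ('n::finite) pt set \<Rightarrow> (('n::finite) pt \<Rightarrow> real) \<Rightarrow> bool" where
  "weak_sol A U u = (
     set_borel_measurable lborel U u \<and>
     (\<forall>K. compact K \<and> K \<subseteq> U \<longrightarrow> set_integrable lborel K (\<lambda>p. (u p)\<^sup>2)) \<and>
     (\<exists>g :: ('n::finite) pt \<Rightarrow> real^'n.
        (\<forall>i. set_borel_measurable lborel U (\<lambda>p. g p $ i)) \<and>
        (\<forall>K. compact K \<and> K \<subseteq> U \<longrightarrow> set_integrable lborel K (\<lambda>p. (norm (g p))\<^sup>2)) \<and>
        (\<forall>\<psi> i. test_fun U \<psi> \<longrightarrow>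
            (LINT p:U|lborel. u p * dX \<psi> p i) = - (LINT p:U|lborel. g p $ i * \<psi> p)) \<and>
        (\<forall>\<psi>. test_fun U \<psi> \<longrightarrow>
            (LINT p:U|lborel. - u p * dT \<psi> p + (A p *v g p) \<bullet> gradX \<psi> p) = 0)))"

end

theory Submission
  imports Defs
begin


lemma smooth_C1:
  assumes "smooth_fun \<psi>"
  shows "\<And>p. (\<psi> has_derivative frechet_derivative \<psi> (at p)) (at p)"
    and "\<And>w. continuous_on UNIV (\<lambda>p. frechet_derivative \<psi> (at p) w)"
    and "continuous_on UNIV \<psi>"
proof -
  have "Ck (Suc 0) \<psi>" "Ck 0 \<psi>" using assms unfolding smooth_fun_def by blast+
  then show "\<And>p. (\<psi> has_derivative frechet_derivative \<psi> (at p)) (at p)"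
    and "\<And>w. continuous_on UNIV (\<lambda>p. frechet_derivative \<psi> (at p) w)"
    and "continuous_on UNIV \<psi>"
    using frechet_derivative_works by auto
qed

lemma deriv_zero_outside:
  assumes "smooth_fun \<psi>" "p \<notin> closure {p. \<psi> p \<noteq> 0}"
  shows "frechet_derivative \<psi> (at p) w = 0"
proof -
  let ?S = "closure {p. \<psi> p \<noteq> 0}"
  have "((\<lambda>_. 0::real) has_derivative (\<lambda>_. 0)) (at p)" by simp
  then have "(\<psi> has_derivative (\<lambda>_. 0)) (at p)"
    apply (rule has_derivative_transform_within_open[where s="- ?S"])
    using assms(2) closure_subset[of "{p. \<psi> p \<noteq> 0}"] by auto
  then have "(\<lambda>_. 0) = frechet_derivative \<psi> (at p)" by (rule frechet_derivative_at)
  then show ?thesis by (metis)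
qed

lemma line_deriv:
  assumes "smooth_fun (\<psi>::'a::euclidean_space \<Rightarrow> real)"
  shows "((\<lambda>s. \<psi> (p + s *\<^sub>R w)) has_field_derivative frechet_derivative \<psi> (at (p + s *\<^sub>R w)) w) (at s)"
proof -
  have d: "(\<psi> has_derivative frechet_derivative \<psi> (at (p + s *\<^sub>R w))) (at (p + s *\<^sub>R w))"
    using smooth_C1(1)[OF assms] .
  have l: "((\<lambda>s. p + s *\<^sub>R w) has_derivative (\<lambda>d. d *\<^sub>R w)) (at s)"
    by (auto intro!: derivative_eq_intros)
  have "((\<lambda>s. \<psi> (p + s *\<^sub>R w)) has_derivative (\<lambda>d. frechet_derivative \<psi> (at (p + s *\<^sub>R w)) (d *\<^sub>R w))) (at s)"
    using has_derivative_compose[OF l d] by simp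
  moreover have "linear (frechet_derivative \<psi> (at (p + s *\<^sub>R w)))"
    using d has_derivative_linear by blast
  ultimately show ?thesis
    unfolding has_field_derivative_def
    by (simp add: linear_scale mult_commute_abs)
qed

lemma integral_deriv_zero:
  fixes \<psi> :: "'a::euclidean_space \<Rightarrow> real"
  assumes sm: "smooth_fun \<psi>" and cpt: "compact (closure {p. \<psi> p \<noteq> 0})"
  shows "integrable lborel (\<lambda>p. frechet_derivative \<psi> (at p) w) \<and>
         integral\<^sup>L lborel (\<lambda>p. frechet_derivative \<psi> (at p) w) = 0"
proof -
  define S where "S = closure {p. \<psi> p \<noteq> 0}"
  define D where "D = (\<lambda>p. frechet_derivative \<psi> (at p) w)"
  have cS: "compact S" using cpt S_def by simp
  have Dz: "D p = 0" if "p \<notin> S" for p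
    using deriv_zero_outside[OF sm] that unfolding S_def D_def by blast
  have \<psi>z: "\<psi> p = 0" if "p \<notin> S" for p
    using that closure_subset[of "{p. \<psi> p \<noteq> 0}"] unfolding S_def by auto
  have Dc: "continuous_on UNIV D" unfolding D_def using smooth_C1(2)[OF sm] .
  have \<psi>c: "continuous_on UNIV \<psi>" using smooth_C1(3)[OF sm] .
  have "compact (D ` S)"
    by (rule compact_continuous_image[OF continuous_on_subset[OF Dc] cS]) simp
  then obtain B0 where B0: "\<forall>x\<in>D ` S. norm x \<le> B0"
    using compact_imp_bounded bounded_iff by metis
  define B where "B = max B0 0"
  have B: "\<bar>D p\<bar> \<le> B" for p
    using B0 Dz[of p] unfolding B_def by (cases "p \<in> S") fastforce+
  have B0le: "0 \<le> B" unfolding B_def by simp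
  have eqD: "D = (\<lambda>p. indicator S p *\<^sub>R D p)"
    using Dz by (auto simp: indicator_def fun_eq_iff)
  have intD: "integrable lborel D"
    by (subst eqD, rule borel_integrable_compact[OF cS continuous_on_subset[OF Dc]]) simp
  have eq\<psi>: "\<psi> = (\<lambda>p. indicator S p *\<^sub>R \<psi> p)"
    using \<psi>z by (auto simp: indicator_def fun_eq_iff)
  have int\<psi>: "integrable lborel \<psi>"
    by (subst eq\<psi>, rule borel_integrable_compact[OF cS continuous_on_subset[OF \<psi>c]]) simp
  have \<psi>m: "\<psi> \<in> borel_measurable borel" using borel_measurable_continuous_onI[OF \<psi>c] .
  have trans: "integrable lborel (\<lambda>p. \<psi> (c + p)) \<and> integral\<^sup>L lborel (\<lambda>p. \<psi> (c + p)) = integral\<^sup>L lborel \<psi>" for c :: 'a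
  proof -
    have m: "(+) c \<in> measurable lborel borel" by simp
    have "integrable (distr lborel borel ((+) c)) \<psi>" using int\<psi> by (simp add: lborel_distr_plus)
    then have "integrable lborel (\<lambda>p. \<psi> (c + p))" using integrable_distr_eq[OF m \<psi>m] by simp
    moreover have "integral\<^sup>L (distr lborel borel ((+) c)) \<psi> = integral\<^sup>L lborel (\<lambda>p. \<psi> (c + p))"
      by (rule integral_distr[OF m \<psi>m])
    ultimately show ?thesis by (simp add: lborel_distr_plus)
  qed
  define h where "h = (\<lambda>k::nat. inverse (real (Suc k)))"
  have hpos: "0 < h k" "h k \<le> 1" for k unfolding h_def by (auto simp: inverse_le_1_iff)
  define q where "q = (\<lambda>k p. (\<psi> (h k *\<^sub>R w + p) - \<psi> p) / h k)"
  have intq: "integral\<^sup>L lborel (q k) = 0" for k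
  proof -
    have "integral\<^sup>L lborel (q k) = (integral\<^sup>L lborel (\<lambda>p. \<psi> (h k *\<^sub>R w + p) - \<psi> p)) / h k"
      unfolding q_def by (rule integral_divide_zero)
    also have "\<dots> = 0" using trans[of "h k *\<^sub>R w"] int\<psi> by simp
    finally show ?thesis .
  qed
  have hlim: "filterlim h (at 0) sequentially"
    apply (rule filterlim_atI)
    using LIMSEQ_inverse_real_of_nat unfolding h_def apply simp
    by simp
  have lim: "(\<lambda>k. q k p) \<longlonglongrightarrow> D p" for p
  proof -
    have "((\<lambda>s. \<psi> (p + s *\<^sub>R w)) has_field_derivative D (p + 0 *\<^sub>R w)) (at 0)"
      unfolding D_def by (rule line_deriv[OF sm])
    then have "((\<lambda>y. (\<psi> (p + y *\<^sub>R w) - \<psi> (p + 0 *\<^sub>R w)) / (y - 0)) \<longlongrightarrow> D p) (at 0)"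
      unfolding has_field_derivative_iff by simp
    from filterlim_compose[OF this hlim]
    show ?thesis unfolding q_def by (simp add: add.commute)
  qed
  define K where "K = (\<lambda>z. fst z - snd z *\<^sub>R w) ` (S \<times> {0..(1::real)})"
  have cK: "compact K" unfolding K_def
    by (rule compact_continuous_image) (auto intro!: continuous_intros compact_Times cS)
  have bound: "norm (q k p) \<le> B * indicator K p" for k p
  proof (cases "\<psi> (h k *\<^sub>R w + p) = 0 \<and> \<psi> p = 0")
    case True
    then show ?thesis using B0le unfolding q_def by simp
  next
    case False
    have pK: "p \<in> K"
    proof (cases "\<psi> p = 0")
      case True
      then have "h k *\<^sub>R w + p \<in> S" using False \<psi>z by blast
      then have "(h k *\<^sub>R w + p, h k) \<in> S \<times> {0..(1::real)}" using hpos[of k] by simp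
      then show ?thesis unfolding K_def by (rule rev_image_eqI) simp
    next
      case False
      then have "p \<in> S" using \<psi>z by blast
      then have "(p, 0) \<in> S \<times> {0..(1::real)}" by simp
      then show ?thesis unfolding K_def by (rule rev_image_eqI) simp
    qed
    obtain z where "\<psi> (p + h k *\<^sub>R w) - \<psi> (p + 0 *\<^sub>R w) = (h k - 0) * D (p + z *\<^sub>R w)"
      using MVT2[of 0 "h k" "\<lambda>s. \<psi> (p + s *\<^sub>R w)" "\<lambda>s. D (p + s *\<^sub>R w)"] hpos[of k]
        line_deriv[OF sm] unfolding D_def by blast
    then have "q k p = D (p + z *\<^sub>R w)" unfolding q_def using hpos[of k]
      by (simp add: add.commute)
    then show ?thesis using B pK by simp
  qed
  have qc: "continuous_on UNIV (q k)" for k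
    unfolding q_def using hpos[of k]
    by (auto intro!: continuous_intros continuous_on_compose2[OF \<psi>c])
  have intw: "integrable lborel (\<lambda>p. B * indicator K p)"
    using borel_integrable_compact[OF cK continuous_on_const[of K B]] by (simp add: mult.commute)
  have "(\<lambda>k. integral\<^sup>L lborel (q k)) \<longlonglongrightarrow> integral\<^sup>L lborel D"
    apply (rule integral_dominated_convergence[OF _ _ intw])
    using borel_measurable_continuous_onI[OF Dc] borel_measurable_continuous_onI[OF qc] lim bound
    by auto
  then have "integral\<^sup>L lborel D = 0" using intq by (simp add: LIMSEQ_const_iff)
  then show ?thesis using intD unfolding D_def by simp
qed



lemma set_to_full:
  assumes "\<And>p. p \<notin> U \<Longrightarrow> F p = 0"
  shows "set_lebesgue_integral M U F = integral\<^sup>L M F"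
  unfolding set_lebesgue_integral_def
  by (rule arg_cong[where f="integral\<^sup>L M"]) (use assms in \<open>auto simp: indicator_def fun_eq_iff\<close>)

lemma lin_trick:
  fixes h f :: "'a \<Rightarrow> real"
  assumes "integrable M h" "integral\<^sup>L M h = 0" "c \<noteq> 0"
  shows "integral\<^sup>L M (\<lambda>x. h x + c * f x) = c * integral\<^sup>L M f"
proof (cases "integrable M f")
  case True
  then show ?thesis using assms by simp
next
  case False
  have "\<not> integrable M (\<lambda>x. h x + c * f x)"
  proof
    assume H: "integrable M (\<lambda>x. h x + c * f x)"
    have "integrable M (\<lambda>x. (h x + c * f x) - h x)"
      using Bochner_Integration.integrable_diff[OF H assms(1)] .
    then have "integrable M (\<lambda>x. (1/c) * ((h x + c * f x) - h x))"
      by (rule integrable_mult_right)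
    moreover have "(\<lambda>x. (1/c) * ((h x + c * f x) - h x)) = f" using assms(3) by (auto simp: fun_eq_iff)
    ultimately show False using False by simp
  qed
  then show ?thesis using False by (simp add: not_integrable_integral_eq)
qed

lemma test_outside:
  assumes "test_fun U \<psi>" "p \<notin> U"
  shows "\<psi> p = 0" "dX \<psi> p i = 0" "dT \<psi> p = 0" "gradX \<psi> p = 0"
proof -
  have sm: "smooth_fun \<psi>" and sub: "closure {p. \<psi> p \<noteq> 0} \<subseteq> U"
    using assms(1) unfolding test_fun_def by auto
  have np: "p \<notin> closure {p. \<psi> p \<noteq> 0}" using sub assms(2) by blast
  then show "\<psi> p = 0" using closure_subset[of "{p. \<psi> p \<noteq> 0}"] by auto
  show "dX \<psi> p i = 0" unfolding dX_def using deriv_zero_outside[OF sm np] .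
  show "dT \<psi> p = 0" unfolding dT_def using deriv_zero_outside[OF sm np] .
  show "gradX \<psi> p = 0" unfolding gradX_def dX_def using deriv_zero_outside[OF sm np]
    by (simp add: vec_eq_iff)
qed

lemma test_int:
  assumes "test_fun U \<psi>"
  shows "integrable lborel (\<lambda>p. dX \<psi> p i) \<and> integral\<^sup>L lborel (\<lambda>p. dX \<psi> p i) = 0"
    and "integrable lborel (\<lambda>p. dT \<psi> p) \<and> integral\<^sup>L lborel (\<lambda>p. dT \<psi> p) = 0"
  using assms integral_deriv_zero unfolding test_fun_def dX_def dT_def by blast+

lemma weak_sol_affine:
  fixes u :: "('n::finite) pt \<Rightarrow> real"
  assumes ws: "weak_sol A U' u" and sub: "U \<subseteq> U'" and oU: "open U" and m: "m > 0"
  shows "weak_sol A U (\<lambda>p. 1 - u p / m)"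
proof -
  have ws': "set_borel_measurable lborel U' u \<and>
     (\<forall>K. compact K \<and> K \<subseteq> U' \<longrightarrow> set_integrable lborel K (\<lambda>p. (u p)\<^sup>2)) \<and>
     (\<exists>g :: ('n::finite) pt \<Rightarrow> real^'n.
        (\<forall>i. set_borel_measurable lborel U' (\<lambda>p. g p $ i)) \<and>
        (\<forall>K. compact K \<and> K \<subseteq> U' \<longrightarrow> set_integrable lborel K (\<lambda>p. (norm (g p))\<^sup>2)) \<and>
        (\<forall>\<psi> i. test_fun U' \<psi> \<longrightarrow>
            (LINT p:U'|lborel. u p * dX \<psi> p i) = - (LINT p:U'|lborel. g p $ i * \<psi> p)) \<and>
        (\<forall>\<psi>. test_fun U' \<psi> \<longrightarrow>
            (LINT p:U'|lborel. - u p * dT \<psi> p + (A p *v g p) \<bullet> gradX \<psi> p) = 0))"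
    using ws unfolding weak_sol_def .
  have um: "(\<lambda>x. indicator U' x *\<^sub>R u x) \<in> borel_measurable lborel"
    using ws' unfolding set_borel_measurable_def by (elim conjE)
  have u2: "\<And>K. compact K \<Longrightarrow> K \<subseteq> U' \<Longrightarrow> set_integrable lborel K (\<lambda>p. (u p)\<^sup>2)"
    using ws' by (elim conjE) simp
  from ws' obtain g :: "('n::finite) pt \<Rightarrow> real^'n" where G:
     "(\<forall>i. set_borel_measurable lborel U' (\<lambda>p. g p $ i)) \<and>
        (\<forall>K. compact K \<and> K \<subseteq> U' \<longrightarrow> set_integrable lborel K (\<lambda>p. (norm (g p))\<^sup>2)) \<and>
        (\<forall>\<psi> i. test_fun U' \<psi> \<longrightarrow>
            (LINT p:U'|lborel. u p * dX \<psi> p i) = - (LINT p:U'|lborel. g p $ i * \<psi> p)) \<and>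
        (\<forall>\<psi>. test_fun U' \<psi> \<longrightarrow>
            (LINT p:U'|lborel. - u p * dT \<psi> p + (A p *v g p) \<bullet> gradX \<psi> p) = 0)"
    apply (elim conjE exE) apply (rule that) by (intro conjI; assumption)
  have gm: "\<And>i. (\<lambda>x. indicator U' x *\<^sub>R (g x $ i)) \<in> borel_measurable lborel"
    using G unfolding set_borel_measurable_def by (elim conjE) simp
  have g2: "\<And>K. compact K \<Longrightarrow> K \<subseteq> U' \<Longrightarrow> set_integrable lborel K (\<lambda>p. (norm (g p))\<^sup>2)"
    using G by (elim conjE) simp
  have eX: "\<And>\<psi> i. test_fun U' \<psi> \<Longrightarrow>
            (LINT p:U'|lborel. u p * dX \<psi> p i) = - (LINT p:U'|lborel. g p $ i * \<psi> p)"
    using G by (elim conjE) simp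
  have eT: "\<And>\<psi>. test_fun U' \<psi> \<Longrightarrow>
            (LINT p:U'|lborel. - u p * dT \<psi> p + (A p *v g p) \<bullet> gradX \<psi> p) = 0"
    using G by (elim conjE) simp
  have nU: "\<And>p. p \<notin> U' \<Longrightarrow> p \<notin> U" using sub by blast
  define gv where "gv = (\<lambda>p. (-1/m) *\<^sub>R g p)"
  have Agv: "\<And>p. A p *v gv p = (-1/m) *\<^sub>R (A p *v g p)" unfolding gv_def by (rule matrix_vector_mult_scaleR)
  have Um: "U \<in> sets lborel" using oU by simp
  have tU': "test_fun U' \<psi>" if "test_fun U \<psi>" for \<psi>
    using that sub unfolding test_fun_def by blast
  have part1: "set_borel_measurable lborel U (\<lambda>p. 1 - u p / m)"
  proof -
    have "(\<lambda>x. indicator U x *\<^sub>R (1 - u x / m)) = (\<lambda>x. indicator U x * (1 - (indicator U' x *\<^sub>R u x) / m))"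
      using sub by (auto simp: indicator_def fun_eq_iff)
    moreover have "(\<lambda>x. indicator U x * (1 - (indicator U' x *\<^sub>R u x) / m)) \<in> borel_measurable lborel"
      using um Um by measurable
    ultimately show ?thesis unfolding set_borel_measurable_def by simp
  qed
  have part2: "set_integrable lborel K (\<lambda>p. (1 - u p / m)\<^sup>2)" if K: "compact K" "K \<subseteq> U" for K
  proof -
    have Km: "K \<in> sets lborel" using borel_closed[OF compact_imp_closed[OF K(1)]] by simp
    have i1: "integrable lborel (\<lambda>x. indicator K x *\<^sub>R (2::real))"
      by (rule borel_integrable_compact[OF K(1)]) simp
    have i2: "integrable lborel (\<lambda>x. indicator K x *\<^sub>R ((2/m\<^sup>2) * (u x)\<^sup>2))"
      using set_integrable_mult_right[OF u2[OF K(1)], of "2/m\<^sup>2"] K sub m unfolding set_integrable_def by auto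
    have iF: "integrable lborel (\<lambda>x. indicator K x *\<^sub>R (2::real) + indicator K x *\<^sub>R ((2/m\<^sup>2) * (u x)\<^sup>2))"
      using i1 i2 by simp
    have eq: "(\<lambda>x. indicator K x *\<^sub>R (1 - u x / m)\<^sup>2) = (\<lambda>x. indicator K x * (1 - (indicator U' x *\<^sub>R u x) / m)\<^sup>2)"
      using sub K by (auto simp: indicator_def fun_eq_iff)
    have meas: "(\<lambda>x. indicator K x *\<^sub>R (1 - u x / m)\<^sup>2) \<in> borel_measurable lborel"
      unfolding eq using um Km by measurable
    have bnd: "(1 - a / m)\<^sup>2 \<le> 2 + 2 / m\<^sup>2 * a\<^sup>2" for a
    proof -
      have "(1 - a/m)\<^sup>2 \<le> 2 * 1\<^sup>2 + 2 * (a/m)\<^sup>2"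
        using sum_squares_ge_zero by (smt (verit) power2_diff zero_le_power2 power2_sum)
      then show ?thesis by (simp add: power_divide)
    qed
    show ?thesis unfolding set_integrable_def
      apply (rule Bochner_Integration.integrable_bound[OF iF meas])
      using bnd by (auto simp: indicator_def)
  qed
  have part3: "set_borel_measurable lborel U (\<lambda>p. gv p $ i)" for i
  proof -
    have "(\<lambda>x. indicator U x *\<^sub>R (gv x $ i)) = (\<lambda>x. (-1/m) * indicator U x * (indicator U' x *\<^sub>R (g x $ i)))"
      using sub by (auto simp: indicator_def fun_eq_iff gv_def)
    moreover have "(\<lambda>x. (-1/m) * indicator U x * (indicator U' x *\<^sub>R (g x $ i))) \<in> borel_measurable lborel"
      using gm[of i] Um by measurable
    ultimately show ?thesis unfolding set_borel_measurable_def by simp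
  qed
  have part4: "set_integrable lborel K (\<lambda>p. (norm (gv p))\<^sup>2)" if K: "compact K" "K \<subseteq> U" for K
  proof -
    have "(\<lambda>p. (norm (gv p))\<^sup>2) = (\<lambda>p. (1/m)\<^sup>2 * (norm (g p))\<^sup>2)"
      using m by (auto simp: gv_def fun_eq_iff power_divide)
    moreover have "set_integrable lborel K (\<lambda>p. (norm (g p))\<^sup>2)" using g2 K sub by blast
    ultimately show ?thesis using set_integrable_mult_right[of "(1/m)\<^sup>2" lborel K "\<lambda>p. (norm (g p))\<^sup>2"] by simp
  qed
  have part5: "(LINT p:U|lborel. (1 - u p / m) * dX \<psi> p i) = - (LINT p:U|lborel. gv p $ i * \<psi> p)"
    if t: "test_fun U \<psi>" for \<psi> i
  proof -
    note z = test_outside[OF t]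
    have "(LINT p:U|lborel. (1 - u p / m) * dX \<psi> p i) = integral\<^sup>L lborel (\<lambda>p. dX \<psi> p i + (-1/m) * (u p * dX \<psi> p i))"
      by (subst set_to_full) (auto simp: z algebra_simps)
    also have "\<dots> = (-1/m) * integral\<^sup>L lborel (\<lambda>p. u p * dX \<psi> p i)"
      by (rule lin_trick) (use test_int(1)[OF t] m in auto)
    also have "integral\<^sup>L lborel (\<lambda>p. u p * dX \<psi> p i) = (LINT p:U'|lborel. u p * dX \<psi> p i)"
      by (subst set_to_full) (auto simp: z nU)
    also have "\<dots> = - (LINT p:U'|lborel. g p $ i * \<psi> p)" using eX[OF tU'[OF t]] .
    also have "(LINT p:U'|lborel. g p $ i * \<psi> p) = integral\<^sup>L lborel (\<lambda>p. g p $ i * \<psi> p)"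
      by (subst set_to_full) (auto simp: z nU)
    also have "(LINT p:U|lborel. gv p $ i * \<psi> p) = integral\<^sup>L lborel (\<lambda>p. (-1/m) * (g p $ i * \<psi> p))"
      by (subst set_to_full) (auto simp: z gv_def)
    ultimately show ?thesis by simp
  qed
  have part6: "(LINT p:U|lborel. - (1 - u p / m) * dT \<psi> p + (A p *v gv p) \<bullet> gradX \<psi> p) = 0"
    if t: "test_fun U \<psi>" for \<psi>
  proof -
    note z = test_outside[OF t]
    have "(LINT p:U|lborel. - (1 - u p / m) * dT \<psi> p + (A p *v gv p) \<bullet> gradX \<psi> p)
        = integral\<^sup>L lborel (\<lambda>p. (- dT \<psi> p) + (-1/m) * (- u p * dT \<psi> p + (A p *v g p) \<bullet> gradX \<psi> p))"
      by (subst set_to_full) (auto simp: z Agv algebra_simps)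
    also have "\<dots> = (-1/m) * integral\<^sup>L lborel (\<lambda>p. - u p * dT \<psi> p + (A p *v g p) \<bullet> gradX \<psi> p)"
      by (rule lin_trick) (use test_int(2)[OF t] m in auto)
    also have "integral\<^sup>L lborel (\<lambda>p. - u p * dT \<psi> p + (A p *v g p) \<bullet> gradX \<psi> p)
        = (LINT p:U'|lborel. - u p * dT \<psi> p + (A p *v g p) \<bullet> gradX \<psi> p)"
      by (subst set_to_full) (auto simp: z nU)
    also have "\<dots> = 0" using eT[OF tU'[OF t]] .
    finally show ?thesis by simp
  qed
  show ?thesis unfolding weak_sol_def
    apply (intro conjI allI impI)
      apply (rule part1)
     apply (rule part2; simp)
    apply (rule exI[of _ gv])
    apply (intro conjI allI impI)
    using part3 part4 part5 part6 by auto
qed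



lemma pdist_sym: "pdist p q = pdist q p"
  unfolding pdist_def by (simp add: norm_minus_commute abs_minus_commute)

lemma pdist_nonneg: "0 \<le> pdist p q"
  unfolding pdist_def by (simp add: le_max_iff_disj)

lemma pdist_tri: "pdist p r \<le> pdist p q + pdist q r"
proof -
  have a: "norm (fst p - fst r) \<le> norm (fst p - fst q) + norm (fst q - fst r)"
    using norm_triangle_ineq[of "fst p - fst q" "fst q - fst r"] by simp
  have "sqrt \<bar>snd p - snd r\<bar> \<le> sqrt (\<bar>snd p - snd q\<bar> + \<bar>snd q - snd r\<bar>)" by simp
  also have "\<dots> \<le> sqrt \<bar>snd p - snd q\<bar> + sqrt \<bar>snd q - snd r\<bar>"
    by (rule sqrt_add_le_add_sqrt) auto
  finally have b: "sqrt \<bar>snd p - snd r\<bar> \<le> sqrt \<bar>snd p - snd q\<bar> + sqrt \<bar>snd q - snd r\<bar>" .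
  have m1: "norm (fst p - fst q) \<le> pdist p q" "sqrt \<bar>snd p - snd q\<bar> \<le> pdist p q"
    "norm (fst q - fst r) \<le> pdist q r" "sqrt \<bar>snd q - snd r\<bar> \<le> pdist q r"
    unfolding pdist_def by auto
  show ?thesis unfolding pdist_def[of p r] using a b m1 by simp
qed

lemma open_pcyl: "open (pcyl r x)"
proof -
  have "continuous_on UNIV (\<lambda>y. pdist x y)"
    unfolding pdist_def by (intro continuous_intros)
  then show ?thesis unfolding pcyl_def
    by (intro open_Collect_less continuous_intros) auto
qed

lemma pcyl_mono: "r \<le> s \<Longrightarrow> pcyl r x \<subseteq> pcyl s x"
  unfolding pcyl_def by auto

lemma pcyl_in_open:
  assumes "open \<Omega>" "Y \<in> \<Omega>"
  shows "\<exists>\<epsilon>>0. pcyl \<epsilon> Y \<subseteq> \<Omega>"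
proof -
  obtain e where e: "e > 0" "ball Y e \<subseteq> \<Omega>" using assms open_contains_ball by blast
  define \<epsilon> where "\<epsilon> = min (e/2) (1/2)"
  have "pcyl \<epsilon> Y \<subseteq> ball Y e"
  proof
    fix q assume "q \<in> pcyl \<epsilon> Y"
    then have q: "norm (fst Y - fst q) < \<epsilon>" "sqrt \<bar>snd Y - snd q\<bar> < \<epsilon>"
      unfolding pcyl_def pdist_def by auto
    have "(sqrt \<bar>snd Y - snd q\<bar>)\<^sup>2 < \<epsilon>\<^sup>2"
      by (rule power_strict_mono) (use q(2) in auto)
    then have "\<bar>snd Y - snd q\<bar> < \<epsilon>\<^sup>2" by simp
    also have "\<epsilon>\<^sup>2 \<le> \<epsilon> * (1/2)"
      unfolding power2_eq_square \<epsilon>_def using e by (intro mult_left_mono) auto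
    finally have t: "\<bar>snd Y - snd q\<bar> < e/4" unfolding \<epsilon>_def by auto
    have "dist Y q = norm (fst Y - fst q, snd Y - snd q)"
      by (cases Y, cases q) (simp add: dist_norm)
    also have "\<dots> \<le> norm (fst Y - fst q) + norm (snd Y - snd q)" by (rule norm_Pair_le)
    also have "\<dots> < e"
    proof -
      have n: "norm (fst Y - fst q) < e/2" using q(1) unfolding \<epsilon>_def by simp
      show ?thesis using n t e(1) by simp
    qed
    finally show "q \<in> ball Y e" by simp
  qed
  moreover have "\<epsilon> > 0" unfolding \<epsilon>_def using e by auto
  ultimately show ?thesis using e by blast
qed

lemma ess_frontier: "ess_bdry \<Omega> \<subseteq> frontier \<Omega>"
  unfolding ess_bdry_def par_bdry_def ssing_bdry_def abn_bdry_def by blast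

lemma pdelta_props:
  assumes "open \<Omega>" "Y \<in> \<Omega>" "x0 \<in> ess_bdry \<Omega>"
  shows "pdelta \<Omega> Y > 0" "pdelta \<Omega> Y \<le> pdist Y x0"
    "\<And>e. e > 0 \<Longrightarrow> \<exists>z \<in> ess_bdry \<Omega>. pdist Y z < pdelta \<Omega> Y + e"
proof -
  let ?S = "{pdist Y z | z. z \<in> ess_bdry \<Omega>}"
  have ne: "?S \<noteq> {}" using assms(3) by blast
  have bb: "bdd_below ?S" by (rule bdd_belowI[of _ 0]) (auto simp: pdist_nonneg)
  have mem: "pdist Y x0 \<in> ?S" using assms(3) by blast
  show "pdelta \<Omega> Y \<le> pdist Y x0" unfolding pdelta_def
    by (rule cInf_lower[OF mem bb])
  obtain \<epsilon> where e: "\<epsilon> > 0" "pcyl \<epsilon> Y \<subseteq> \<Omega>" using pcyl_in_open[OF assms(1,2)] by blast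
  have "\<epsilon> \<le> pdist Y z" if "z \<in> ess_bdry \<Omega>" for z
  proof -
    have "z \<in> frontier \<Omega>" using that ess_frontier by blast
    then have "z \<notin> \<Omega>" using assms(1) by (simp add: frontier_def interior_open)
    then have "z \<notin> pcyl \<epsilon> Y" using e by blast
    then show ?thesis unfolding pcyl_def by simp
  qed
  then have "\<epsilon> \<le> pdelta \<Omega> Y" unfolding pdelta_def
    by (intro cInf_greatest ne) blast
  then show "pdelta \<Omega> Y > 0" using e by simp
  fix e :: real assume "e > 0"
  then have "Inf ?S < pdelta \<Omega> Y + e" unfolding pdelta_def by simp
  from cInf_lessD[OF ne this] show "\<exists>z \<in> ess_bdry \<Omega>. pdist Y z < pdelta \<Omega> Y + e" by blast
qed

lemma iteration:
  fixes u :: "('n::finite) pt \<Rightarrow> real"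
  assumes H: "(\<forall>x r. x \<in> ess_bdry \<Omega> \<and> r > 0 \<and> pcyl r x \<subseteq> pcyl (3 * R) x0 \<longrightarrow>
       (\<forall>v. (\<forall>Y \<in> pcyl r x \<inter> \<Omega>. v Y \<ge> 0) \<and>
            weak_sol A (pcyl r x \<inter> \<Omega>) v \<and>
            continuous_on (pcyl r x \<inter> \<Omega>) v \<and>
            (\<forall>z \<in> pcyl r x \<inter> ess_bdry \<Omega>. (v \<longlongrightarrow> 1) (at z within (pcyl r x \<inter> \<Omega>)))
          \<longrightarrow> (\<forall>Y \<in> pcyl (\<gamma> * r) x \<inter> \<Omega>. v Y \<ge> \<eta>)))"
  and g': "0 < g'" "g' \<le> \<gamma>" "g' \<le> 1" and e': "e' \<le> \<eta>" "e' < 1"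
  and m: "m > 0" and ub: "\<forall>Y\<in>pcyl (3*R) x0 \<inter> \<Omega>. u Y \<le> m"
  and ws: "weak_sol A (pcyl (3 * R) x0 \<inter> \<Omega>) u"
  and cont: "continuous_on (pcyl (3 * R) x0 \<inter> \<Omega>) u"
  and lim: "\<forall>z \<in> pcyl (3 * R) x0 \<inter> ess_bdry \<Omega>. (u \<longlongrightarrow> 0) (at z within (pcyl (3 * R) x0 \<inter> \<Omega>))"
  and z: "z \<in> ess_bdry \<Omega>" and R: "R > 0" and zsub: "pcyl R z \<subseteq> pcyl (3*R) x0"
  and oO: "open \<Omega>"
  shows "\<forall>Y \<in> pcyl (g'^k * R) z \<inter> \<Omega>. u Y \<le> (1-e')^k * m"
proof (induction k)
  case 0
  then show ?case using ub zsub by auto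
next
  case (Suc k)
  define r where "r = g'^k * R"
  define mk where "mk = (1-e')^k * m"
  define U where "U = pcyl r z \<inter> \<Omega>"
  define U0 where "U0 = pcyl (3*R) x0 \<inter> \<Omega>"
  have rpos: "r > 0" unfolding r_def using g' R by simp
  have mkpos: "mk > 0" unfolding mk_def using e' m by simp
  have "g'^k \<le> 1" using g' by (simp add: power_le_one)
  then have "r \<le> R" unfolding r_def using R by (simp add: mult_left_le_one_le)
  then have rsub: "pcyl r z \<subseteq> pcyl (3*R) x0" using pcyl_mono[of r R z] zsub by blast
  have Usub: "U \<subseteq> U0" unfolding U_def U0_def using rsub by blast
  have oU: "open U" unfolding U_def using open_pcyl oO by blast
  have IH: "\<forall>Y\<in>U. u Y \<le> mk" using Suc.IH unfolding U_def r_def mk_def .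
  define v where "v = (\<lambda>p. 1 - u p / mk)"
  have c1: "\<forall>Y\<in>U. v Y \<ge> 0" using IH mkpos unfolding v_def by (auto simp: divide_le_eq)
  have c2: "weak_sol A U v" unfolding v_def
    by (rule weak_sol_affine[OF ws[folded U0_def] Usub oU mkpos])
  have c3: "continuous_on U v" unfolding v_def
    using continuous_on_subset[OF cont[folded U0_def] Usub] mkpos
    by (auto intro!: continuous_intros)
  have c4: "\<forall>z' \<in> pcyl r z \<inter> ess_bdry \<Omega>. (v \<longlongrightarrow> 1) (at z' within U)"
  proof
    fix z' assume "z' \<in> pcyl r z \<inter> ess_bdry \<Omega>"
    then have "z' \<in> pcyl (3 * R) x0 \<inter> ess_bdry \<Omega>" using rsub by blast
    then have "(u \<longlongrightarrow> 0) (at z' within U0)" using lim unfolding U0_def by blast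
    then have "(u \<longlongrightarrow> 0) (at z' within U)" using tendsto_within_subset Usub by blast
    then have "((\<lambda>p. 1 - u p / mk) \<longlongrightarrow> 1 - 0 / mk) (at z' within U)"
      using mkpos by (intro tendsto_intros) auto
    then show "(v \<longlongrightarrow> 1) (at z' within U)" unfolding v_def by simp
  qed
  have Hz: "\<forall>Y \<in> pcyl (\<gamma> * r) z \<inter> \<Omega>. v Y \<ge> \<eta>"
    using H z rpos rsub c1 c2 c3 c4 unfolding U_def by blast
  show ?case
  proof
    fix Y assume Y: "Y \<in> pcyl (g' ^ Suc k * R) z \<inter> \<Omega>"
    have "g' ^ Suc k * R = g' * r" unfolding r_def by simp
    also have "\<dots> \<le> \<gamma> * r" using g' rpos by simp
    finally have "Y \<in> pcyl (\<gamma> * r) z \<inter> \<Omega>" using Y pcyl_mono by blast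
    then have "\<eta> \<le> 1 - u Y / mk" using Hz unfolding v_def by blast
    then have "u Y / mk \<le> 1 - e'" using e' by simp
    then have "u Y \<le> (1 - e') * mk" using mkpos by (simp add: divide_le_eq)
    then show "u Y \<le> (1 - e') ^ Suc k * m" unfolding mk_def by (simp add: mult.assoc)
  qed
qed

lemma main_est:
  fixes u :: "('n::finite) pt \<Rightarrow> real"
  assumes g': "0 < g'" "g' \<le> \<gamma>" "g' < 1" and e': "0 < e'" "e' \<le> \<eta>" "e' < 1"
  and \<alpha>: "0 < \<alpha>" "g' powr \<alpha> = 1 - e'"
  and oO: "open \<Omega>" and x0: "x0 \<in> ess_bdry \<Omega>" and R: "R > 0"
  and H: "(\<forall>x r. x \<in> ess_bdry \<Omega> \<and> r > 0 \<and> pcyl r x \<subseteq> pcyl (3 * R) x0 \<longrightarrow>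
       (\<forall>v. (\<forall>Y \<in> pcyl r x \<inter> \<Omega>. v Y \<ge> 0) \<and>
            weak_sol A (pcyl r x \<inter> \<Omega>) v \<and>
            continuous_on (pcyl r x \<inter> \<Omega>) v \<and>
            (\<forall>z \<in> pcyl r x \<inter> ess_bdry \<Omega>. (v \<longlongrightarrow> 1) (at z within (pcyl r x \<inter> \<Omega>)))
          \<longrightarrow> (\<forall>Y \<in> pcyl (\<gamma> * r) x \<inter> \<Omega>. v Y \<ge> \<eta>)))"
  and nn: "\<forall>Y \<in> pcyl (3 * R) x0 \<inter> \<Omega>. u Y \<ge> 0"
  and ws: "weak_sol A (pcyl (3 * R) x0 \<inter> \<Omega>) u"
  and cont: "continuous_on (pcyl (3 * R) x0 \<inter> \<Omega>) u"
  and lim: "\<forall>z \<in> pcyl (3 * R) x0 \<inter> ess_bdry \<Omega>. (u \<longlongrightarrow> 0) (at z within (pcyl (3 * R) x0 \<inter> \<Omega>))"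
  and Y: "Y \<in> pcyl R x0 \<inter> \<Omega>"
  shows "ereal (u Y) \<le> ereal ((2/g') powr \<alpha> * (pdelta \<Omega> Y / R) powr \<alpha>) *
                            (SUP Z \<in> pcyl (3 * R) x0 \<inter> \<Omega>. ereal (u Z))"
proof -
  define U0 where "U0 = pcyl (3 * R) x0 \<inter> \<Omega>"
  define Ms where "Ms = (SUP Z \<in> U0. ereal (u Z))"
  define d where "d = pdelta \<Omega> Y"
  define c where "c = (2/g') powr \<alpha> * (d / R) powr \<alpha>"
  have YU0: "Y \<in> U0" using Y pcyl_mono[of R "3*R" x0] R unfolding U0_def by auto
  have YO: "Y \<in> \<Omega>" using Y by blast
  have dpos: "d > 0" unfolding d_def using pdelta_props(1)[OF oO YO x0] .
  have dle: "d \<le> pdist Y x0" unfolding d_def using pdelta_props(2)[OF oO YO x0] .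
  have Yx0: "pdist x0 Y < R" using Y unfolding pcyl_def by simp
  have dR: "d < R" using dle Yx0 pdist_sym[of Y x0] by simp
  have cpos: "c > 0" unfolding c_def using g' dpos R by simp
  have uYM: "ereal (u Y) \<le> Ms" unfolding Ms_def using YU0 by (rule SUP_upper)
  have uY0: "0 \<le> u Y" using nn YU0 unfolding U0_def by blast
  show ?thesis
  proof (cases "Ms = \<infinity>")
    case True
    then show ?thesis using cpos g' R dpos unfolding Ms_def U0_def c_def d_def by simp
  next
    case False
    have "Ms \<noteq> - \<infinity>" using uYM by auto
    with False obtain m where mdef: "Ms = ereal m" by (cases Ms) auto
    have ub: "\<forall>Z\<in>U0. u Z \<le> m"
    proof
      fix Z assume "Z \<in> U0"
      then have "ereal (u Z) \<le> Ms" unfolding Ms_def by (rule SUP_upper)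
      then show "u Z \<le> m" using mdef by simp
    qed
    have mnn: "0 \<le> m" using ub YU0 uY0 by force
    have key: "u Y \<le> c * m"
    proof (cases "m = 0")
      case True
      then show ?thesis using ub YU0 by auto
    next
      case False
      then have mpos: "m > 0" using mnn by simp
      define \<epsilon> where "\<epsilon> = min d (R - pdist x0 Y)"
      have epos: "\<epsilon> > 0" unfolding \<epsilon>_def using dpos Yx0 by simp
      obtain z where z: "z \<in> ess_bdry \<Omega>" "pdist Y z < d + \<epsilon>"
        using pdelta_props(3)[OF oO YO x0 epos] unfolding d_def by blast
      have zsub: "pcyl R z \<subseteq> pcyl (3*R) x0"
      proof
        fix q assume "q \<in> pcyl R z"
        then have "pdist z q < R" unfolding pcyl_def by simp
        moreover have "pdist x0 q \<le> pdist x0 Y + pdist Y z + pdist z q"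
          using pdist_tri[of x0 q Y] pdist_tri[of Y q z] by simp
        moreover have "pdist Y z < d + (R - pdist x0 Y)" using z(2) unfolding \<epsilon>_def by simp
        ultimately have "pdist x0 q < 3 * R" using dR by simp
        then show "q \<in> pcyl (3*R) x0" unfolding pcyl_def by simp
      qed
      have it: "\<forall>Y \<in> pcyl (g'^k * R) z \<inter> \<Omega>. u Y \<le> (1-e')^k * m" for k
        by (rule iteration[OF H g'(1,2) _ e'(2,3) mpos ub[unfolded U0_def] ws cont lim z(1) R zsub oO])
           (use g' in simp)
      have Yz: "pdist z Y < 2 * d" using z(2) pdist_sym[of Y z] unfolding \<epsilon>_def by simp
      show ?thesis
      proof (cases "R \<le> 2 * d")
        case True
        have "1 \<le> (2/g') * (d/R)"
        proof -
          have "1/2 \<le> d/R" using True R by (simp add: field_simps)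
          moreover have "1 \<le> 1/g'" using g' by simp
          ultimately have "1 * (1/2) \<le> (1/g') * (d/R)"
            using g' by (intro mult_mono) auto
          then show ?thesis by (simp add: mult.commute)
        qed
        then have "1 \<le> ((2/g') * (d/R)) powr \<alpha>" using ge_one_powr_ge_zero \<alpha> by simp
        then have c1: "1 \<le> c" unfolding c_def using powr_mult[of "2/g'" "d/R" \<alpha>] by simp
        have "u Y \<le> m" using ub YU0 by blast
        also have "\<dots> \<le> c * m" using c1 mpos by simp
        finally show ?thesis .
      next
        case False
        have ex: "\<exists>n. g'^n * R < 2 * d"
        proof -
          obtain n where "g'^n < 2 * d / R" using real_arch_pow_inv[of "2*d/R" g'] dpos R g' by auto
          then show ?thesis using R by (auto simp: field_simps)
        qed
        define k0 where "k0 = (LEAST n. g'^n * R < 2 * d)"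
        have k0: "g'^k0 * R < 2 * d" unfolding k0_def using LeastI_ex[OF ex] .
        have "k0 \<noteq> 0"
        proof
          assume "k0 = 0"
          then show False using k0 False by simp
        qed
        then obtain k where kk: "k0 = Suc k" using not0_implies_Suc by blast
        have k1: "g' ^ Suc k * R < 2 * d" using k0 kk by simp
        have k2: "2 * d \<le> g' ^ k * R"
        proof (rule ccontr)
          assume "\<not> 2 * d \<le> g' ^ k * R"
          then have "k0 \<le> k" unfolding k0_def by (intro Least_le) simp
          then show False using kk by simp
        qed
        have "Y \<in> pcyl (g'^k * R) z \<inter> \<Omega>" using Yz k2 YO unfolding pcyl_def by simp
        then have uk: "u Y \<le> (1-e')^k * m" using it by blast
        have "(1-e')^k = (g' powr \<alpha>)^k" using \<alpha>(2) by simp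
        also have "\<dots> = g' powr (real k * \<alpha>)" using g' by (simp add: powr_power)
        also have "\<dots> = (g' powr real k) powr \<alpha>" by (simp add: powr_powr)
        also have "\<dots> = (g' ^ k) powr \<alpha>" using g' by (simp add: powr_realpow)
        also have "\<dots> \<le> ((2/g') * (d/R)) powr \<alpha>"
        proof (rule powr_mono2)
          show "0 \<le> \<alpha>" using \<alpha> by simp
          show "0 \<le> g' ^ k" using g' by simp
          have "g' * g' ^ k * R < 2 * d" using k1 by simp
          then have "g' ^ k < 2 * d / (g' * R)" using g' R by (simp add: field_simps)
          then show "g' ^ k \<le> (2/g') * (d/R)" by simp
        qed
        also have "\<dots> = c" unfolding c_def by (rule powr_mult)
        finally have "(1-e')^k \<le> c" .
        then have "(1-e')^k * m \<le> c * m" using mpos by simp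
        then show ?thesis using uk by simp
      qed
    qed
    have "(SUP Z\<in>pcyl (3*R) x0 \<inter> \<Omega>. ereal (u Z)) = ereal m" using mdef unfolding Ms_def U0_def .
    then show ?thesis using key unfolding c_def d_def by simp
  qed
qed

theorem lemma4p3:
  fixes \<eta> \<gamma> :: real
  assumes "\<eta> > 0" and "\<gamma> > 0"
  shows "\<exists>C>0. \<exists>\<alpha>>0. \<forall>(lam::real) (A :: ('n::finite) pt \<Rightarrow> real^('n::finite)^'n) (\<Omega> :: ('n::finite) pt set) x0 R.
    coeff_ok lam A \<and> open \<Omega> \<and> x0 \<in> ess_bdry \<Omega> \<and> R > 0 \<and>
    (\<forall>x r. x \<in> ess_bdry \<Omega> \<and> r > 0 \<and> pcyl r x \<subseteq> pcyl (3 * R) x0 \<longrightarrow>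
       (\<forall>v. (\<forall>Y \<in> pcyl r x \<inter> \<Omega>. v Y \<ge> 0) \<and>
            weak_sol A (pcyl r x \<inter> \<Omega>) v \<and>
            continuous_on (pcyl r x \<inter> \<Omega>) v \<and>
            (\<forall>z \<in> pcyl r x \<inter> ess_bdry \<Omega>. (v \<longlongrightarrow> 1) (at z within (pcyl r x \<inter> \<Omega>)))
          \<longrightarrow> (\<forall>Y \<in> pcyl (\<gamma> * r) x \<inter> \<Omega>. v Y \<ge> \<eta>)))
    \<longrightarrow>
    (\<forall>u. (\<forall>Y \<in> pcyl (3 * R) x0 \<inter> \<Omega>. u Y \<ge> 0) \<and>
         weak_sol A (pcyl (3 * R) x0 \<inter> \<Omega>) u \<and>
         continuous_on (pcyl (3 * R) x0 \<inter> \<Omega>) u \<and>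
         (\<forall>z \<in> pcyl (3 * R) x0 \<inter> ess_bdry \<Omega>.
             (u \<longlongrightarrow> 0) (at z within (pcyl (3 * R) x0 \<inter> \<Omega>)))
       \<longrightarrow> (\<forall>Y \<in> pcyl R x0 \<inter> \<Omega>.
             ereal (u Y) \<le> ereal (C * (pdelta \<Omega> Y / R) powr \<alpha>) *
                            (SUP Z \<in> pcyl (3 * R) x0 \<inter> \<Omega>. ereal (u Z))))"
proof -
  define g' where "g' = min \<gamma> (1/2)"
  define e' where "e' = min \<eta> (1/2)"
  define \<alpha> where "\<alpha> = ln (1 - e') / ln g'"
  have g': "0 < g'" "g' \<le> \<gamma>" "g' < 1" unfolding g'_def using assms by auto
  have e': "0 < e'" "e' \<le> \<eta>" "e' < 1" unfolding e'_def using assms by auto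
  have l1: "ln (1 - e') < 0" using e' by simp
  have l2: "ln g' < 0" using g' by simp
  have apos: "0 < \<alpha>" unfolding \<alpha>_def using l1 l2 by (simp add: divide_neg_neg)
  have gpow: "g' powr \<alpha> = 1 - e'"
    unfolding powr_def \<alpha>_def using g' e' l2 by simp
  have Cpos: "0 < (2/g') powr \<alpha>" using g' by simp
  show ?thesis
    apply (rule exI[of _ "(2/g') powr \<alpha>"], rule conjI[OF Cpos], rule exI[of _ \<alpha>], rule conjI[OF apos])
    apply (intro allI impI ballI)
    apply (elim conjE)
    apply (rule main_est[OF g' e' apos gpow])
    by assumption+
qed

end
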